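(* Let $\Lambda\in\mathcal Q_n$. The statements within each of (i)–(iv) are equivalent. (i) For $\mathbf F\in\mathcal M^n$: (a) $\Lambda\mathbf F\prec_{\mathrm{st}}\mathbf F$; (b) $\mathbf F\prec_{\mathrm{st}}\Lambda\mathbf F$; (c) $\Lambda\mathbf F=\mathbf F$. (ii) For $\mathbf F\in\mathcal M^n$: (a) $\Lambda\otimes\mathbf F\prec_{\mathrm{st}}\mathbf F$; (b) $\mathbf F\prec_{\mathrm{st}}\Lambda\otimes\mathbf F$; (c) $\Lambda\otimes\mathbf F=\mathbf F$. (iii) For $\mathbf F\in\mathcal M_1^n$: (a) $\Lambda\otimes\mathbf F\prec_{\mathrm{cx}}\mathbf F$; (b) $\mathbf F\prec_{\mathrm{cx}}\Lambda\otimes\mathbf F$; (c) $\Lambda\otimes\mathbf F=\mathbf F$. (iv) For $\mathbf F\in\mathcal M_1^n$: (a) $\Lambda\mathbf F\prec_{\mathrm{cx}}\mathbf F$; (b) $\Lambda\mathbf F=\mathbf F$.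
   Context: $\mathcal M$ is the set of cdfs on $\mathbb{R}$, $\mathcal M_1$ those with finite mean. $\mathcal Q_n$ is the set of $n\times n$ doubly stochastic matrices. For $\Lambda=(\Lambda_{ij})\in\mathcal Q_n$ and $\mathbf F=(F_1,\dots,F_n)$: $\Lambda\mathbf F$ is the tuple with $i$-th component $\sum_j\Lambda_{ij}F_j$ (distribution mixture); $\Lambda\otimes\mathbf F=(G_1,\dots,G_n)$ with $G_i^{-1}=\sum_j\Lambda_{ij}F_j^{-1}$ (quantile mixture), where $F^{-1}(p)=\inf\{x:F(x)\ge p\}$. For cdfs, $F\prec_{\mathrm{st}}G$ means $F\ge G$ pointwise; for $F,G\in\mathcal M_1$, $F\prec_{\mathrm{cx}}G$ means $\int\phi\,\mathrm dF\le\int\phi\,\mathrm dG$ for all convex $\phi$. For tuples these orders are taken componentwise. *)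

theory Defs
  imports "HOL-Probability.Probability"
begin

definition is_cdf :: "(real \<Rightarrow> real) \<Rightarrow> bool" where
  "is_cdf F \<longleftrightarrow> mono F \<and> (\<forall>a. continuous (at_right a) F)
     \<and> (F \<longlongrightarrow> 0) at_bot \<and> (F \<longlongrightarrow> 1) at_top"

definition law :: "(real \<Rightarrow> real) \<Rightarrow> real measure" where
  "law F = interval_measure F"

definition is_cdf1 :: "(real \<Rightarrow> real) \<Rightarrow> bool" where
  "is_cdf1 F \<longleftrightarrow> is_cdf F \<and> integrable (law F) (\<lambda>x. x)"

text \<open>Integral with values in the extended reals (positive part minus negative part).
  For convex phi and F with finite mean the negative part is finite.\<close>
definition ext_integral :: "(real \<Rightarrow> real) \<Rightarrow> (real \<Rightarrow> real) \<Rightarrow> ereal" where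
  "ext_integral F \<phi> =
     enn2ereal (\<integral>\<^sup>+ x. ennreal (\<phi> x) \<partial>law F) - enn2ereal (\<integral>\<^sup>+ x. ennreal (- \<phi> x) \<partial>law F)"

definition quantile :: "(real \<Rightarrow> real) \<Rightarrow> real \<Rightarrow> real" where
  "quantile F p = Inf {x. p \<le> F x}"

text \<open>The cdf whose quantile function on (0,1) is Q (Q nondecreasing, left-continuous).\<close>
definition cdf_of_quantile :: "(real \<Rightarrow> real) \<Rightarrow> real \<Rightarrow> real" where
  "cdf_of_quantile Q x = Sup ({0} \<union> {p \<in> {0<..<1}. Q p \<le> x})"

definition doubly_stochastic :: "real^'n^'n \<Rightarrow> bool" where
  "doubly_stochastic L \<longleftrightarrow> (\<forall>i j. 0 \<le> L $ i $ j)
     \<and> (\<forall>i. (\<Sum>j\<in>UNIV. L $ i $ j) = 1) \<and> (\<forall>j. (\<Sum>i\<in>UNIV. L $ i $ j) = 1)"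

definition dmix :: "real^'n^'n \<Rightarrow> ('n \<Rightarrow> real \<Rightarrow> real) \<Rightarrow> ('n \<Rightarrow> real \<Rightarrow> real)" where
  "dmix L F = (\<lambda>i x. \<Sum>j\<in>UNIV. L $ i $ j * F j x)"

definition qmix :: "real^'n^'n \<Rightarrow> ('n \<Rightarrow> real \<Rightarrow> real) \<Rightarrow> ('n \<Rightarrow> real \<Rightarrow> real)" where
  "qmix L F = (\<lambda>i. cdf_of_quantile (\<lambda>p. \<Sum>j\<in>UNIV. L $ i $ j * quantile (F j) p))"

definition st_le :: "(real \<Rightarrow> real) \<Rightarrow> (real \<Rightarrow> real) \<Rightarrow> bool" where
  "st_le F G \<longleftrightarrow> (\<forall>x. G x \<le> F x)"

definition st_le_tuple :: "('n \<Rightarrow> real \<Rightarrow> real) \<Rightarrow> ('n \<Rightarrow> real \<Rightarrow> real) \<Rightarrow> bool" where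
  "st_le_tuple F G \<longleftrightarrow> (\<forall>i. st_le (F i) (G i))"

definition cx_le :: "(real \<Rightarrow> real) \<Rightarrow> (real \<Rightarrow> real) \<Rightarrow> bool" where
  "cx_le F G \<longleftrightarrow> (\<forall>\<phi>. convex_on UNIV \<phi> \<longrightarrow> ext_integral F \<phi> \<le> ext_integral G \<phi>)"

definition cx_le_tuple :: "('n \<Rightarrow> real \<Rightarrow> real) \<Rightarrow> ('n \<Rightarrow> real \<Rightarrow> real) \<Rightarrow> bool" where
  "cx_le_tuple F G \<longleftrightarrow> (\<forall>i. cx_le (F i) (G i))"

end

theory Submission
  imports Defs
begin

lemma cdf_props:
  assumes "is_cdf F"
  shows "real_distribution (law F)" "cdf (law F) = F"
  using assms unfolding is_cdf_def law_def
  by (auto intro!: real_distribution_interval_measure cdf_interval_measure simp: mono_def)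

lemma cdf_range:
  assumes "is_cdf F" shows "0 \<le> F x" "F x \<le> 1"
proof -
  interpret real_distribution "law F" by (rule cdf_props[OF assms])
  show "0 \<le> F x" "F x \<le> 1" using cdf_nonneg[of x] cdf_bounded_prob[of x]
    by (simp_all add: cdf_props[OF assms])
qed

lemma cdf_galois:
  assumes "is_cdf F" "0 < p" "p < 1"
  shows "p \<le> F x \<longleftrightarrow> quantile F p \<le> x"
proof -
  interpret right_continuous_mono F 0 1
    using assms(1) unfolding is_cdf_def right_continuous_mono_def by blast
  show ?thesis unfolding quantile_def by (rule pseudoinverse[OF assms(2,3)])
qed

abbreviation U :: "real measure" where "U \<equiv> restrict_space lborel {0<..<1::real}"

lemma law_quantile:
  assumes "is_cdf F"
  shows "law F = distr U borel (quantile F)"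
proof -
  interpret cdf_distribution "law F"
    using cdf_props(1)[OF assms] by (simp add: cdf_distribution_def)
  have q: "quantile F = (\<lambda>\<omega>. Inf {x. \<omega> \<le> cdf (law F) x})"
    by (simp add: fun_eq_iff quantile_def cdf_props(2)[OF assms])
  show ?thesis unfolding q by (rule distr_I_eq_M[symmetric])
qed

lemma prob_U: "prob_space U"
  by (auto simp add: emeasure_restrict_space space_restrict_space intro!: prob_spaceI)

lemma mono_measurable_U:
  fixes Q :: "real \<Rightarrow> real"
  assumes "mono_on {0<..<1} Q"
  shows "Q \<in> borel_measurable U"
proof -
  have "Q \<in> borel_measurable (restrict_space borel {0<..<1})"
    by (rule borel_measurable_mono_on_fnc[OF assms])
  moreover have "sets U = sets (restrict_space borel {0<..<1::real})"
    by (simp add: sets_restrict_space)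
  ultimately show ?thesis using measurable_cong_sets by blast
qed

lemma quantile_mono:
  assumes "is_cdf F" shows "mono_on {0<..<1} (quantile F)"
proof (rule mono_onI)
  fix p p' :: real assume "p \<in> {0<..<1}" "p' \<in> {0<..<1}" "p \<le> p'"
  then show "quantile F p \<le> quantile F p'"
  proof -
    have "p' \<le> F (quantile F p')" using cdf_galois[OF assms, of p' "quantile F p'"] \<open>p' \<in> _\<close> by simp
    then have "p \<le> F (quantile F p')" using \<open>p \<le> p'\<close> by simp
    then show ?thesis using cdf_galois[OF assms, of p "quantile F p'"] \<open>p \<in> _\<close> by simp
  qed
qed

lemma quantile_leftcont:
  assumes "is_cdf F" "0 < p" "p < 1"
  shows "(quantile F \<longlongrightarrow> quantile F p) (at_left p)"
proof (rule order_tendstoI)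
  fix y assume y: "y < quantile F p"
  then have Fy: "F y < p" using cdf_galois[OF assms, of y] by auto
  have "eventually (\<lambda>u. u \<in> {max (F y) 0<..<p}) (at_left p)"
    using Fy assms(2) by (intro eventually_at_left_real) auto
  then show "eventually (\<lambda>u. y < quantile F u) (at_left p)"
  proof (rule eventually_mono)
    fix u assume u: "u \<in> {max (F y) 0<..<p}"
    then show "y < quantile F u" using cdf_galois[OF assms(1), of u y] assms by auto
  qed
next
  fix y assume y: "quantile F p < y"
  have "eventually (\<lambda>u. u \<in> {0<..<p}) (at_left p)"
    using assms(2) by (intro eventually_at_left_real) auto
  then show "eventually (\<lambda>u. quantile F u < y) (at_left p)"
  proof (rule eventually_mono)
    fix u assume u: "u \<in> {0<..<p}"
    then have "quantile F u \<le> quantile F p"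
      using quantile_mono[OF assms(1)] assms by (auto intro: mono_onD)
    then show "quantile F u < y" using y by simp
  qed
qed


lemma coq_galois:
  fixes Q :: "real \<Rightarrow> real"
  assumes mono: "mono_on {0<..<1} Q"
    and lc: "\<And>p. 0 < p \<Longrightarrow> p < 1 \<Longrightarrow> (Q \<longlongrightarrow> Q p) (at_left p)"
    and p: "0 < p" "p < 1"
  shows "p \<le> cdf_of_quantile Q x \<longleftrightarrow> Q p \<le> x"
proof
  let ?S = "{0} \<union> {p\<in>{0<..<1}. Q p \<le> x}"
  have bdd: "bdd_above ?S" by (rule bdd_aboveI[of _ 1]) auto
  {
    assume "Q p \<le> x" then have "p \<in> ?S" using p by auto
    then show "p \<le> cdf_of_quantile Q x" unfolding cdf_of_quantile_def by (rule cSup_upper[OF _ bdd])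
  }
  assume le: "p \<le> cdf_of_quantile Q x"
  show "Q p \<le> x"
  proof (rule ccontr)
    assume "\<not> Q p \<le> x" then have xq: "x < Q p" by simp
    have ev: "eventually (\<lambda>u. x < Q u) (at_left p)"
      by (rule order_tendstoD(1)[OF lc[OF p] xq])
    then obtain b where b: "b < p" "\<And>u. b < u \<Longrightarrow> u < p \<Longrightarrow> x < Q u"
      using eventually_at_left[of 0 p] p by auto
    have "Sup ?S \<le> max b 0"
    proof (rule cSup_least)
      show "?S \<noteq> {}" by auto
    next
      fix s assume s: "s \<in> ?S"
      show "s \<le> max b 0"
      proof (cases "s = 0")
        case False
        then have s1: "s \<in> {0<..<1}" "Q s \<le> x" using s by auto
        show ?thesis
        proof (rule ccontr)
          assume "\<not> s \<le> max b 0"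
          then have "b < s" by simp
          show False
          proof (cases "s < p")
            case True then show False using b(2)[OF \<open>b < s\<close>] s1 by simp
          next
            case False
            then have "Q p \<le> Q s" using mono p s1 by (auto intro: mono_onD)
            then show False using s1 xq by simp
          qed
        qed
      qed simp
    qed
    then show False using le b p unfolding cdf_of_quantile_def by simp
  qed
qed

lemma coq_range:
  shows "0 \<le> cdf_of_quantile Q x" "cdf_of_quantile Q x \<le> 1"
proof -
  let ?S = "{0} \<union> {p\<in>{0<..<1}. Q p \<le> x}"
  have bdd: "bdd_above ?S" by (rule bdd_aboveI[of _ 1]) auto
  show "0 \<le> cdf_of_quantile Q x" unfolding cdf_of_quantile_def by (rule cSup_upper[OF _ bdd]) simp
  show "cdf_of_quantile Q x \<le> 1" unfolding cdf_of_quantile_def by (rule cSup_least) auto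
qed

lemma coq_cdf:
  fixes Q :: "real \<Rightarrow> real"
  assumes mono: "mono_on {0<..<1} Q"
    and lc: "\<And>p. 0 < p \<Longrightarrow> p < 1 \<Longrightarrow> (Q \<longlongrightarrow> Q p) (at_left p)"
  shows "real_distribution (distr U borel Q)" "cdf (distr U borel Q) = cdf_of_quantile Q"
proof -
  interpret prob_space U by (rule prob_U)
  have meas: "Q \<in> borel_measurable U" by (rule mono_measurable_U[OF mono])
  show "real_distribution (distr U borel Q)" by (rule real_distribution_distr[OF meas])
  show "cdf (distr U borel Q) = cdf_of_quantile Q"
  proof
    fix x
    let ?G = "cdf_of_quantile Q x"
    have "cdf (distr U borel Q) x = measure U (Q -` {..x} \<inter> space U)"
      unfolding cdf_def by (rule measure_distr[OF meas]) simp
    also have "Q -` {..x} \<inter> space U = {0<..<1} \<inter> {..?G}"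
      using coq_galois[OF mono lc] by (auto simp: space_restrict_space)
    also have "measure U ({0<..<1} \<inter> {..?G}) = measure lborel ({0<..<1} \<inter> {..?G})"
      by (rule measure_restrict_space) auto
    also have "\<dots> = ?G"
    proof (cases "?G < 1")
      case True
      then have "{0<..<1} \<inter> {..?G} = {0<..?G}" by auto
      then show ?thesis using coq_range[of Q x] by simp
    next
      case False
      then have "{0<..<1} \<inter> {..?G} = {0<..<1}" by auto
      then show ?thesis using coq_range[of Q x] False by simp
    qed
    finally show "cdf (distr U borel Q) x = ?G" .
  qed
qed

lemma coq_is_cdf:
  fixes Q :: "real \<Rightarrow> real"
  assumes mono: "mono_on {0<..<1} Q"
    and lc: "\<And>p. 0 < p \<Longrightarrow> p < 1 \<Longrightarrow> (Q \<longlongrightarrow> Q p) (at_left p)"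
  shows "is_cdf (cdf_of_quantile Q)"
proof -
  interpret real_distribution "distr U borel Q" by (rule coq_cdf(1)[OF mono lc])
  have c: "cdf (distr U borel Q) = cdf_of_quantile Q" by (rule coq_cdf(2)[OF mono lc])
  show ?thesis unfolding is_cdf_def c[symmetric]
    using cdf_nondecreasing cdf_is_right_cont cdf_lim_at_bot cdf_lim_at_top_prob
    by (auto intro: monoI)
qed

lemma coq_law:
  fixes Q :: "real \<Rightarrow> real"
  assumes mono: "mono_on {0<..<1} Q"
    and lc: "\<And>p. 0 < p \<Longrightarrow> p < 1 \<Longrightarrow> (Q \<longlongrightarrow> Q p) (at_left p)"
  shows "law (cdf_of_quantile Q) = distr U borel Q"
proof (rule cdf_unique[OF cdf_props(1)[OF coq_is_cdf[OF mono lc]] coq_cdf(1)[OF mono lc]])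
  have "cdf (law (cdf_of_quantile Q)) = cdf_of_quantile Q" by (rule cdf_props(2)[OF coq_is_cdf[OF mono lc]])
  also have "\<dots> = cdf (distr U borel Q)" by (rule coq_cdf(2)[OF mono lc, symmetric])
  finally show "cdf (law (cdf_of_quantile Q)) = cdf (distr U borel Q)" .
qed

lemma coq_cong:
  assumes "\<And>p. 0 < p \<Longrightarrow> p < 1 \<Longrightarrow> Q p = Q' p"
  shows "cdf_of_quantile Q = cdf_of_quantile Q'"
proof -
  have "\<And>x. {p\<in>{0<..<1}. Q p \<le> x} = {p\<in>{0<..<1}. Q' p \<le> x}" using assms by auto
  then show ?thesis unfolding cdf_of_quantile_def by simp
qed

lemma unit_eq:
  fixes a b :: real
  assumes "0 \<le> a" "a \<le> 1" "0 \<le> b" "b \<le> 1"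
    and "\<And>p. 0 < p \<Longrightarrow> p < 1 \<Longrightarrow> (p \<le> a \<longleftrightarrow> p \<le> b)"
  shows "a = b"
proof (rule ccontr)
  assume "a \<noteq> b"
  then have "a < b \<or> b < a" by auto
  then show False
  proof
    assume "a < b" then show False using assms(5)[of "(a+b)/2"] assms(1-4) by auto
  next
    assume "b < a" then show False using assms(5)[of "(a+b)/2"] assms(1-4) by auto
  qed
qed

lemma coq_quantile:
  assumes "is_cdf F"
  shows "cdf_of_quantile (quantile F) = F"
proof
  fix x
  show "cdf_of_quantile (quantile F) x = F x"
  proof (rule unit_eq[OF coq_range cdf_range[OF assms]])
    fix p :: real assume p: "0 < p" "p < 1"
    have "p \<le> cdf_of_quantile (quantile F) x \<longleftrightarrow> quantile F p \<le> x"
      by (rule coq_galois[OF quantile_mono[OF assms] quantile_leftcont[OF assms] p])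
    also have "\<dots> \<longleftrightarrow> p \<le> F x" using cdf_galois[OF assms p] by simp
    finally show "p \<le> cdf_of_quantile (quantile F) x \<longleftrightarrow> p \<le> F x" .
  qed
qed


lemma ds_sum:
  fixes L :: "real^'n^'n"
  assumes "doubly_stochastic L"
  shows "(\<Sum>i\<in>UNIV. \<Sum>j\<in>UNIV. L $ i $ j * v j) = (\<Sum>j\<in>UNIV. v j)"
proof -
  have "(\<Sum>i\<in>UNIV. \<Sum>j\<in>UNIV. L $ i $ j * v j) = (\<Sum>j\<in>UNIV. \<Sum>i\<in>UNIV. L $ i $ j * v j)"
    by (rule sum.swap)
  also have "\<dots> = (\<Sum>j\<in>UNIV. (\<Sum>i\<in>UNIV. L $ i $ j) * v j)"
    by (simp add: sum_distrib_right)
  also have "\<dots> = (\<Sum>j\<in>UNIV. v j)"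
    using assms unfolding doubly_stochastic_def by simp
  finally show ?thesis .
qed

lemma sum_le_eq:
  fixes a b :: "'n::finite \<Rightarrow> real"
  assumes "\<And>i. a i \<le> b i" "(\<Sum>i\<in>UNIV. a i) = (\<Sum>i\<in>UNIV. b i)"
  shows "a i = b i"
proof -
  have "(\<Sum>i\<in>UNIV. b i - a i) = 0" using assms(2) by (simp add: sum_subtractf)
  then have "\<forall>i\<in>UNIV. b i - a i = 0"
    using sum_nonneg_eq_0_iff[of UNIV "\<lambda>i. b i - a i"] assms(1) by simp
  then show ?thesis by simp
qed

lemma part_i:
  fixes L :: "real^'n^'n"
  assumes ds: "doubly_stochastic L"
  shows "(st_le_tuple (dmix L F) F \<longleftrightarrow> dmix L F = F) \<and>
         (st_le_tuple F (dmix L F) \<longleftrightarrow> dmix L F = F)"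
proof -
  have sums: "(\<Sum>i\<in>UNIV. dmix L F i x) = (\<Sum>i\<in>UNIV. F i x)" for x
    unfolding dmix_def by (rule ds_sum[OF ds])
  have A: "dmix L F = F" if "\<And>i x. F i x \<le> dmix L F i x"
  proof (intro ext)
    fix i x show "dmix L F i x = F i x"
      using sum_le_eq[of "\<lambda>i. F i x" "\<lambda>i. dmix L F i x", OF that sums[symmetric]] by simp
  qed
  have B: "dmix L F = F" if "\<And>i x. dmix L F i x \<le> F i x"
  proof (intro ext)
    fix i x show "dmix L F i x = F i x"
      using sum_le_eq[of "\<lambda>i. dmix L F i x" "\<lambda>i. F i x", OF that sums] by simp
  qed
  show ?thesis using A B unfolding st_le_tuple_def st_le_def by auto
qed

definition Qf :: "real^'n^'n \<Rightarrow> ('n \<Rightarrow> real \<Rightarrow> real) \<Rightarrow> 'n \<Rightarrow> real \<Rightarrow> real" where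
  "Qf L F i p = (\<Sum>j\<in>UNIV. L $ i $ j * quantile (F j) p)"

lemma qmix_Qf: "qmix L F i = cdf_of_quantile (Qf L F i)"
  unfolding qmix_def Qf_def[abs_def] by simp

lemma Qf_mono:
  fixes L :: "real^'n^'n"
  assumes ds: "doubly_stochastic L" and F: "\<And>j. is_cdf (F j)"
  shows "mono_on {0<..<1} (Qf L F i)"
proof (rule mono_onI)
  fix p p' :: real assume pp: "p \<in> {0<..<1}" "p' \<in> {0<..<1}" "p \<le> p'"
  show "Qf L F i p \<le> Qf L F i p'"
    unfolding Qf_def
  proof (rule sum_mono)
    fix j
    have "quantile (F j) p \<le> quantile (F j) p'"
      by (rule mono_onD[OF quantile_mono[OF F] pp])
    then show "L $ i $ j * quantile (F j) p \<le> L $ i $ j * quantile (F j) p'"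
      using ds unfolding doubly_stochastic_def by (auto intro: mult_left_mono)
  qed
qed

lemma Qf_lc:
  fixes L :: "real^'n^'n"
  assumes F: "\<And>j. is_cdf (F j)" and p: "0 < p" "p < 1"
  shows "(Qf L F i \<longlongrightarrow> Qf L F i p) (at_left p)"
  unfolding Qf_def[abs_def]
  by (intro tendsto_sum tendsto_mult_left quantile_leftcont[OF F p])

lemma qmix_eqI:
  fixes L :: "real^'n^'n"
  assumes F: "\<And>j. is_cdf (F j)"
    and eq: "\<And>i p. 0 < p \<Longrightarrow> p < 1 \<Longrightarrow> Qf L F i p = quantile (F i) p"
  shows "qmix L F = F"
proof (intro ext)
  fix i x
  have "qmix L F i = cdf_of_quantile (quantile (F i))"
    unfolding qmix_Qf by (rule coq_cong[OF eq])
  also have "\<dots> = F i" by (rule coq_quantile[OF F])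
  finally show "qmix L F i x = F i x" by simp
qed

lemma Qf_sum:
  fixes L :: "real^'n^'n"
  assumes ds: "doubly_stochastic L"
  shows "(\<Sum>i\<in>UNIV. Qf L F i p) = (\<Sum>i\<in>UNIV. quantile (F i) p)"
  unfolding Qf_def by (rule ds_sum[OF ds])

lemma part_ii:
  fixes L :: "real^'n^'n"
  assumes ds: "doubly_stochastic L" and F: "\<And>j. is_cdf (F j)"
  shows "(st_le_tuple (qmix L F) F \<longleftrightarrow> qmix L F = F) \<and>
         (st_le_tuple F (qmix L F) \<longleftrightarrow> qmix L F = F)"
proof -
  note mono = Qf_mono[OF ds F] and lc = Qf_lc[OF F]
  have A: "qmix L F = F" if h: "\<And>i x. F i x \<le> qmix L F i x"
  proof (rule qmix_eqI[OF F])
    fix i and p :: real assume p: "0 < p" "p < 1"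
    have le: "Qf L F k p \<le> quantile (F k) p" for k
    proof -
      have "p \<le> F k (quantile (F k) p)" using cdf_galois[OF F p] by simp
      also have "\<dots> \<le> qmix L F k (quantile (F k) p)" by (rule h)
      finally show ?thesis unfolding qmix_Qf using coq_galois[OF mono lc p] by simp
    qed
    show "Qf L F i p = quantile (F i) p"
      by (rule sum_le_eq[of "\<lambda>k. Qf L F k p" "\<lambda>k. quantile (F k) p", OF le Qf_sum[OF ds]])
  qed
  have B: "qmix L F = F" if h: "\<And>i x. qmix L F i x \<le> F i x"
  proof (rule qmix_eqI[OF F])
    fix i and p :: real assume p: "0 < p" "p < 1"
    have le: "quantile (F k) p \<le> Qf L F k p" for k
    proof -
      have "p \<le> qmix L F k (Qf L F k p)" unfolding qmix_Qf using coq_galois[OF mono lc p] by simp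
      also have "\<dots> \<le> F k (Qf L F k p)" by (rule h)
      finally show ?thesis using cdf_galois[OF F p] by simp
    qed
    show "Qf L F i p = quantile (F i) p"
      by (rule sum_le_eq[of "\<lambda>k. quantile (F k) p" "\<lambda>k. Qf L F k p", OF le Qf_sum[OF ds, symmetric], symmetric])
  qed
  show ?thesis using A B unfolding st_le_tuple_def st_le_def by auto
qed


definition piU :: "(real \<Rightarrow> real) \<Rightarrow> real \<Rightarrow> real" where
  "piU q t = (\<integral>u. max (q u - t) 0 \<partial>U)"

definition TU :: "(real \<Rightarrow> real) \<Rightarrow> real \<Rightarrow> real" where
  "TU q p = (\<integral>u. q u * indicator {p<..} u \<partial>U)"

definition cU :: "real \<Rightarrow> real \<Rightarrow> real" where
  "cU t p = (\<integral>u. t * indicator {p<..} u \<partial>U)"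

lemma convex_hinge: "convex_on UNIV (\<lambda>x::real. max (x - t) 0)"
proof (rule convex_onI)
  fix s x y :: real assume s: "0 < s" "s < 1"
  have 1: "(1 - s) * (x - t) \<le> (1 - s) * max (x - t) 0" using s by (intro mult_left_mono) auto
  have 2: "s * (y - t) \<le> s * max (y - t) 0" using s by (intro mult_left_mono) auto
  have 3: "0 \<le> (1 - s) * max (x - t) 0" "0 \<le> s * max (y - t) 0" using s by auto
  have "(1 - s) *\<^sub>R x + s *\<^sub>R y - t = (1 - s) * (x - t) + s * (y - t)" by (simp add: algebra_simps)
  then show "max ((1 - s) *\<^sub>R x + s *\<^sub>R y - t) 0 \<le> (1 - s) * max (x - t) 0 + s * max (y - t) 0"
    using 1 2 3 by simp
qed simp

lemma integrable_hinge:
  fixes q :: "real \<Rightarrow> real" and t :: real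
  assumes "integrable U q"
  shows "integrable U (\<lambda>u. max (q u - t) 0)"
proof -
  interpret prob_space U by (rule prob_U)
  have a: "integrable U (\<lambda>u. q u - t)" using assms by (rule Bochner_Integration.integrable_diff) simp
  show ?thesis by (rule Bochner_Integration.integrable_max[OF a]) simp
qed

lemma ind_meas: "A \<in> sets borel \<Longrightarrow> (indicator A :: real \<Rightarrow> real) \<in> borel_measurable U"
  by (intro measurable_restrict_space1) (simp add: borel_measurable_indicator)

lemma integrable_ind_const: "integrable U (\<lambda>u. (t::real) * indicator A u)" if "A \<in> sets borel"
proof -
  interpret prob_space U by (rule prob_U)
  show ?thesis
  proof (rule integrable_const_bound[where B="\<bar>t\<bar>"])
    show "AE u in U. norm (t * indicator A u) \<le> \<bar>t\<bar>" by (rule AE_I2) (simp add: indicator_def)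
    show "(\<lambda>u. t * indicator A u) \<in> borel_measurable U"
      by (intro borel_measurable_times borel_measurable_const ind_meas[OF that])
  qed
qed

lemma integrable_mult_ind:
  fixes q :: "real \<Rightarrow> real"
  assumes int: "integrable U q" and A: "A \<in> sets borel"
  shows "integrable U (\<lambda>u. q u * indicator A u)"
proof (rule Bochner_Integration.integrable_bound[OF int])
  show "(\<lambda>u. q u * indicator A u) \<in> borel_measurable U"
    by (intro borel_measurable_times borel_measurable_integrable[OF int] ind_meas[OF A])
  show "AE u in U. norm (q u * indicator A u) \<le> norm (q u)" by (rule AE_I2) (simp add: indicator_def)
qed

lemma ext_U:
  assumes law: "law F = distr U borel q" and meas: "q \<in> borel_measurable U" and int: "integrable U q"
  shows "ext_integral F (\<lambda>x. max (x - t) 0) = ereal (piU q t)"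
proof -
  have z: "(\<integral>\<^sup>+x. ennreal (- max (x - t) 0) \<partial>law F) = 0"
  proof -
    have "(\<integral>\<^sup>+x. ennreal (- max (x - t) 0) \<partial>law F) = (\<integral>\<^sup>+x. 0 \<partial>law F)"
      by (rule nn_integral_cong) (simp add: ennreal_neg)
    then show ?thesis by simp
  qed
  have "(\<integral>\<^sup>+x. ennreal (max (x - t) 0) \<partial>law F) = (\<integral>\<^sup>+u. ennreal (max (q u - t) 0) \<partial>U)"
    unfolding law by (rule nn_integral_distr[OF meas]) simp
  also have "\<dots> = ennreal (piU q t)"
    unfolding piU_def by (rule nn_integral_eq_integral[OF integrable_hinge[OF int]]) simp
  finally have "(\<integral>\<^sup>+x. ennreal (max (x - t) 0) \<partial>law F) = ennreal (piU q t)" .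
  moreover have "0 \<le> piU q t" unfolding piU_def by (rule Bochner_Integration.integral_nonneg) simp
  ultimately show ?thesis unfolding ext_integral_def z by (simp add: zero_ennreal.rep_eq)
qed

lemma T_le:
  assumes int: "integrable U q"
  shows "TU q p \<le> piU q t + cU t p"
proof -
  have "TU q p \<le> (\<integral>u. max (q u - t) 0 + t * indicator {p<..} u \<partial>U)"
    unfolding TU_def
    by (rule integral_mono[OF integrable_mult_ind[OF int] Bochner_Integration.integrable_add[OF integrable_hinge[OF int] integrable_ind_const]])
       (auto simp: indicator_def)
  also have "\<dots> = piU q t + cU t p"
    unfolding piU_def cU_def
    by (rule Bochner_Integration.integral_add[OF integrable_hinge[OF int] integrable_ind_const]) simp
  finally show ?thesis .
qed

lemma T_eq:
  assumes int: "integrable U q" and mono: "mono_on {0<..<1} q" and p: "0 < p" "p < 1"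
  shows "TU q p = piU q (q p) + cU (q p) p"
proof -
  have "TU q p = (\<integral>u. max (q u - q p) 0 + q p * indicator {p<..} u \<partial>U)"
    unfolding TU_def
  proof (rule Bochner_Integration.integral_cong[OF refl])
    fix u assume u: "u \<in> space U"
    then have u01: "u \<in> {0<..<1}" by (simp add: space_restrict_space)
    show "q u * indicator {p<..} u = max (q u - q p) 0 + q p * indicator {p<..} u"
    proof (cases "p < u")
      case True
      then have "q p \<le> q u" using mono_onD[OF mono, of p u] p u01 by auto
      then show ?thesis using True by (simp add: indicator_def)
    next
      case False
      then have "q u \<le> q p" using mono_onD[OF mono, of u p] p u01 by auto
      then show ?thesis using False by (simp add: indicator_def)
    qed
  qed
  also have "\<dots> = piU q (q p) + cU (q p) p"
    unfolding piU_def cU_def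
    by (rule Bochner_Integration.integral_add[OF integrable_hinge[OF int] integrable_ind_const]) simp
  finally show ?thesis .
qed

lemma measure_U_Ioc:
  assumes "0 < a" "a \<le> b" "b < 1"
  shows "measure U {a<..b} = b - a"
proof -
  have "measure U {a<..b} = measure lborel {a<..b}"
    by (rule measure_restrict_space) (use assms in auto)
  then show ?thesis using assms by simp
qed

lemma T_inj_aux:
  fixes f g :: "real \<Rightarrow> real"
  assumes intf: "integrable U f" and intg: "integrable U g"
    and lc: "(f \<longlongrightarrow> f p) (at_left p)" and mono: "mono_on {0<..<1} g"
    and p: "0 < p" "p < 1" and lt: "g p < f p"
    and T: "\<And>a. 0 < a \<Longrightarrow> a < 1 \<Longrightarrow> TU f a = TU g a"
  shows False
proof -
  define c where "c = (f p - g p) / 2"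
  have c: "0 < c" using lt by (simp add: c_def)
  have "g p + c < f p" using lt by (simp add: c_def field_simps)
  then have ev: "eventually (\<lambda>u. g p + c < f u) (at_left p)"
    by (rule order_tendstoD(1)[OF lc])
  then obtain b where b: "b < p" "\<And>u. b < u \<Longrightarrow> u < p \<Longrightarrow> g p + c < f u"
    using eventually_at_left[of 0 p] p by auto
  define a where "a = max b (p / 2)"
  have a: "0 < a" "a < p" using b p by (auto simp: a_def)
  have diff: "TU h a - TU h p = (\<integral>u. h u * indicator {a<..p} u \<partial>U)" if inth: "integrable U h" for h
  proof -
    have "TU h a - TU h p = (\<integral>u. h u * indicator {a<..} u - h u * indicator {p<..} u \<partial>U)"
      unfolding TU_def
      by (rule Bochner_Integration.integral_diff[symmetric]) (auto intro: integrable_mult_ind[OF inth])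
    also have "\<dots> = (\<integral>u. h u * indicator {a<..p} u \<partial>U)"
      by (rule Bochner_Integration.integral_cong[OF refl]) (use a in \<open>auto simp: indicator_def\<close>)
    finally show ?thesis .
  qed
  have "(\<integral>u. (f u - g u) * indicator {a<..p} u \<partial>U)
      = (\<integral>u. f u * indicator {a<..p} u \<partial>U) - (\<integral>u. g u * indicator {a<..p} u \<partial>U)"
    by (subst Bochner_Integration.integral_diff[symmetric])
       (auto intro: integrable_mult_ind[OF intf] integrable_mult_ind[OF intg] simp: left_diff_distrib)
  also have "\<dots> = 0"
    using diff[OF intf] diff[OF intg] T[of a] T[of p] a p by simp
  finally have zero: "(\<integral>u. (f u - g u) * indicator {a<..p} u \<partial>U) = 0" .
  have "(\<integral>u. c * indicator {a<..p} u \<partial>U) \<le> (\<integral>u. (f u - g u) * indicator {a<..p} u \<partial>U)"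
  proof (rule integral_mono_AE[OF integrable_ind_const])
    show "integrable U (\<lambda>u. (f u - g u) * indicator {a<..p} u)"
      by (rule integrable_mult_ind) (use intf intg in auto)
    show "AE u in U. c * indicator {a<..p} u \<le> (f u - g u) * indicator {a<..p} u"
    proof (rule AE_I2)
      fix u assume u: "u \<in> space U"
      then have u01: "u \<in> {0<..<1}" by (simp add: space_restrict_space)
      show "c * indicator {a<..p} u \<le> (f u - g u) * indicator {a<..p} u"
      proof (cases "u \<in> {a<..p}")
        case True
        have "c \<le> f u - g u"
        proof (cases "u < p")
          case True': True
          have "g u \<le> g p" using mono_onD[OF mono, of u p] u01 p True by auto
          moreover have "g p + c < f u" using b(2)[of u] True True' by (auto simp: a_def)
          ultimately show ?thesis by simp
        next
          case False
          then have "u = p" using True by auto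
          then show ?thesis using c by (simp add: c_def)
        qed
        then show ?thesis using True by simp
      qed simp
    qed
  qed simp
  also have "\<dots> = 0" by (rule zero)
  moreover have "{a<..p} \<inter> {0<..<1} = {a<..p}" using a p by auto
  ultimately have "c * measure U {a<..p} \<le> 0"
    by (simp add: space_restrict_space)
  moreover have "measure U {a<..p} = p - a" by (rule measure_U_Ioc) (use a p in auto)
  ultimately show False using c a by (simp add: mult_le_0_iff)
qed


lemma part_iii:
  fixes L :: "real^'n^'n"
  assumes ds: "doubly_stochastic L" and F: "\<And>j. is_cdf1 (F j)"
  shows "(cx_le_tuple (qmix L F) F \<longleftrightarrow> qmix L F = F) \<and>
         (cx_le_tuple F (qmix L F) \<longleftrightarrow> qmix L F = F)"
proof -
  have Fc: "\<And>j. is_cdf (F j)" using F by (simp add: is_cdf1_def)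
  define q where "q j = quantile (F j)" for j
  define Q where "Q i = Qf L F i" for i
  have lawF: "law (F j) = distr U borel (q j)" for j
    unfolding q_def by (rule law_quantile[OF Fc])
  have monoq: "mono_on {0<..<1} (q j)" for j unfolding q_def by (rule quantile_mono[OF Fc])
  have measq: "q j \<in> borel_measurable U" for j by (rule mono_measurable_U[OF monoq])
  have intq: "integrable U (q j)" for j
  proof -
    have "integrable (law (F j)) (\<lambda>x. x)" using F[of j] by (simp add: is_cdf1_def)
    then have "integrable (distr U borel (q j)) (\<lambda>x. x)" by (simp add: lawF)
    then have "integrable U (\<lambda>u. q j u)"
      using integrable_distr_eq[OF measq, of "\<lambda>x. x"] by simp
    then show ?thesis by simp
  qed
  have monoQ: "mono_on {0<..<1} (Q i)" for i unfolding Q_def by (rule Qf_mono[OF ds Fc])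
  have lcQ: "\<And>p. 0 < p \<Longrightarrow> p < 1 \<Longrightarrow> (Q i \<longlongrightarrow> Q i p) (at_left p)" for i
    unfolding Q_def by (rule Qf_lc[OF Fc])
  have lcq: "\<And>p. 0 < p \<Longrightarrow> p < 1 \<Longrightarrow> (q i \<longlongrightarrow> q i p) (at_left p)" for i
    unfolding q_def by (rule quantile_leftcont[OF Fc])
  have lawG: "law (qmix L F i) = distr U borel (Q i)" for i
    unfolding qmix_Qf Q_def[symmetric] by (rule coq_law[OF monoQ lcQ])
  have measQ: "Q i \<in> borel_measurable U" for i by (rule mono_measurable_U[OF monoQ])
  have intQ: "integrable U (Q i)" for i
  proof -
    have "integrable U (\<lambda>p. \<Sum>j\<in>UNIV. L $ i $ j * q j p)"
      by (intro Bochner_Integration.integrable_sum Bochner_Integration.integrable_mult_right intq)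
    then show ?thesis unfolding Q_def Qf_def[abs_def] q_def by simp
  qed
  have extF: "ext_integral (F i) (\<lambda>x. max (x - t) 0) = ereal (piU (q i) t)" for i t
    by (rule ext_U[OF lawF measq intq])
  have extG: "ext_integral (qmix L F i) (\<lambda>x. max (x - t) 0) = ereal (piU (Q i) t)" for i t
    by (rule ext_U[OF lawG measQ intQ])
  have TQ: "TU (Q i) p = (\<Sum>j\<in>UNIV. L $ i $ j * TU (q j) p)" for i p
  proof -
    have "TU (Q i) p = (\<integral>u. (\<Sum>j\<in>UNIV. L $ i $ j * (q j u * indicator {p<..} u)) \<partial>U)"
      unfolding TU_def Q_def Qf_def q_def by (simp add: sum_distrib_right mult.assoc)
    also have "\<dots> = (\<Sum>j\<in>UNIV. (\<integral>u. L $ i $ j * (q j u * indicator {p<..} u) \<partial>U))"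
      by (rule Bochner_Integration.integral_sum)
         (intro Bochner_Integration.integrable_mult_right integrable_mult_ind[OF intq]; simp)
    also have "\<dots> = (\<Sum>j\<in>UNIV. L $ i $ j * TU (q j) p)"
      unfolding TU_def by simp
    finally show ?thesis .
  qed
  have Tsum: "(\<Sum>i\<in>UNIV. TU (Q i) p) = (\<Sum>i\<in>UNIV. TU (q i) p)" for p
    unfolding TQ by (rule ds_sum[OF ds])
  have conclude: "qmix L F = F" if Teq: "\<And>i p. 0 < p \<Longrightarrow> p < 1 \<Longrightarrow> TU (Q i) p = TU (q i) p"
  proof (rule qmix_eqI[OF Fc])
    fix i and p :: real assume p: "0 < p" "p < 1"
    have "Q i p = q i p"
    proof (rule ccontr)
      assume "Q i p \<noteq> q i p"
      then have "q i p < Q i p \<or> Q i p < q i p" by auto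
      then show False
      proof
        assume "q i p < Q i p"
        show False
          by (rule T_inj_aux[OF intQ intq lcQ[OF p] monoq p \<open>q i p < Q i p\<close>]) (rule Teq)
      next
        assume "Q i p < q i p"
        show False
          by (rule T_inj_aux[OF intq intQ lcq[OF p] monoQ p \<open>Q i p < q i p\<close>]) (rule Teq[symmetric])
      qed
    qed
    then show "Qf L F i p = quantile (F i) p" by (simp add: Q_def q_def)
  qed
  have A: "qmix L F = F" if cx: "cx_le_tuple (qmix L F) F"
  proof (rule conclude)
    fix i and p :: real assume p: "0 < p" "p < 1"
    have pile: "piU (Q k) t \<le> piU (q k) t" for k t
    proof -
      have "ext_integral (qmix L F k) (\<lambda>x. max (x - t) 0) \<le> ext_integral (F k) (\<lambda>x. max (x - t) 0)"
        using cx convex_hinge[of t] unfolding cx_le_tuple_def cx_le_def by blast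
      then show ?thesis unfolding extF extG by simp
    qed
    have le: "TU (Q k) p \<le> TU (q k) p" for k
    proof -
      have "TU (Q k) p \<le> piU (Q k) (q k p) + cU (q k p) p" by (rule T_le[OF intQ])
      also have "\<dots> \<le> piU (q k) (q k p) + cU (q k p) p" using pile by simp
      also have "\<dots> = TU (q k) p" by (rule T_eq[OF intq monoq p, symmetric])
      finally show ?thesis .
    qed
    show "TU (Q i) p = TU (q i) p"
      by (rule sum_le_eq[of "\<lambda>k. TU (Q k) p" "\<lambda>k. TU (q k) p", OF le Tsum])
  qed
  have B: "qmix L F = F" if cx: "cx_le_tuple F (qmix L F)"
  proof (rule conclude)
    fix i and p :: real assume p: "0 < p" "p < 1"
    have pile: "piU (q k) t \<le> piU (Q k) t" for k t
    proof -
      have "ext_integral (F k) (\<lambda>x. max (x - t) 0) \<le> ext_integral (qmix L F k) (\<lambda>x. max (x - t) 0)"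
        using cx convex_hinge[of t] unfolding cx_le_tuple_def cx_le_def by blast
      then show ?thesis unfolding extF extG by simp
    qed
    have le: "TU (q k) p \<le> TU (Q k) p" for k
    proof -
      have "TU (q k) p \<le> piU (q k) (Q k p) + cU (Q k p) p" by (rule T_le[OF intq])
      also have "\<dots> \<le> piU (Q k) (Q k p) + cU (Q k p) p" using pile by simp
      also have "\<dots> = TU (Q k) p" by (rule T_eq[OF intQ monoQ p, symmetric])
      finally show ?thesis .
    qed
    show "TU (Q i) p = TU (q i) p"
      by (rule sum_le_eq[of "\<lambda>k. TU (q k) p" "\<lambda>k. TU (Q k) p", OF le Tsum[symmetric], symmetric])
  qed
  have refl: "cx_le_tuple F F" by (simp add: cx_le_tuple_def cx_le_def)
  show ?thesis using A B refl by auto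
qed


lemma mix_is_cdf:
  fixes w :: "'n::finite \<Rightarrow> real" and F :: "'n \<Rightarrow> real \<Rightarrow> real"
  assumes w: "\<And>j. 0 \<le> w j" "(\<Sum>j\<in>UNIV. w j) = 1" and F: "\<And>j. is_cdf (F j)"
  shows "is_cdf (\<lambda>x. \<Sum>j\<in>UNIV. w j * F j x)"
  unfolding is_cdf_def
proof (intro conjI allI)
  show "mono (\<lambda>x. \<Sum>j\<in>UNIV. w j * F j x)"
  proof (rule monoI)
    fix x y :: real assume "x \<le> y"
    then have "F j x \<le> F j y" for j using F[of j] unfolding is_cdf_def by (auto dest: monoD)
    then show "(\<Sum>j\<in>UNIV. w j * F j x) \<le> (\<Sum>j\<in>UNIV. w j * F j y)"
      by (intro sum_mono mult_left_mono w)
  qed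
  fix a
  show "continuous (at_right a) (\<lambda>x. \<Sum>j\<in>UNIV. w j * F j x)"
    using F unfolding is_cdf_def by (intro continuous_sum continuous_mult continuous_const) auto
next
  have "((\<lambda>x. \<Sum>j\<in>UNIV. w j * F j x) \<longlongrightarrow> (\<Sum>j\<in>UNIV. w j * 0)) at_bot"
    using F unfolding is_cdf_def by (intro tendsto_sum tendsto_mult_left) auto
  then show "((\<lambda>x. \<Sum>j\<in>UNIV. w j * F j x) \<longlongrightarrow> 0) at_bot" by simp
next
  have "((\<lambda>x. \<Sum>j\<in>UNIV. w j * F j x) \<longlongrightarrow> (\<Sum>j\<in>UNIV. w j * 1)) at_top"
    using F unfolding is_cdf_def by (intro tendsto_sum tendsto_mult_left) auto
  then show "((\<lambda>x. \<Sum>j\<in>UNIV. w j * F j x) \<longlongrightarrow> 1) at_top" using w by simp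
qed

lemma mix_nn:
  fixes w :: "'n::finite \<Rightarrow> real" and F :: "'n \<Rightarrow> real \<Rightarrow> real"
  assumes w: "\<And>j. 0 \<le> w j" "(\<Sum>j\<in>UNIV. w j) = 1" and F: "\<And>j. is_cdf (F j)"
    and f: "f \<in> borel_measurable borel"
  shows "(\<integral>\<^sup>+x. f x \<partial>law (\<lambda>x. \<Sum>j\<in>UNIV. w j * F j x))
       = (\<Sum>j\<in>UNIV. ennreal (w j) * (\<integral>\<^sup>+x. f x \<partial>law (F j)))"
proof -
  define G where "G = (\<lambda>x. \<Sum>j\<in>UNIV. w j * F j x)"
  define W where "W = density (count_space (UNIV :: 'n set)) (\<lambda>j. ennreal (w j))"
  define N where "N = (\<lambda>j. law (F j))"
  define M where "M = W \<bind> N"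
  have sN: "sets (N j) = sets borel" for j by (simp add: N_def law_def)
  have Nmeas: "N \<in> measurable W (subprob_algebra borel)"
  proof -
    have "N \<in> measurable (count_space UNIV) (subprob_algebra borel)"
      using cdf_props(1)[OF F] sN
      by (auto simp: space_subprob_algebra N_def real_distribution_def intro: prob_space_imp_subprob_space)
    moreover have "sets W = sets (count_space UNIV)" by (simp add: W_def)
    ultimately show ?thesis using measurable_cong_sets by blast
  qed
  have spW: "space W \<noteq> {}" by (simp add: W_def)
  have nnM: "(\<integral>\<^sup>+x. g x \<partial>M) = (\<Sum>j\<in>UNIV. ennreal (w j) * (\<integral>\<^sup>+x. g x \<partial>N j))"
    if g: "g \<in> borel_measurable borel" for g
  proof -
    have "(\<integral>\<^sup>+x. g x \<partial>M) = (\<integral>\<^sup>+j. (\<integral>\<^sup>+x. g x \<partial>N j) \<partial>W)"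
      unfolding M_def by (rule nn_integral_bind[OF g Nmeas])
    also have "\<dots> = (\<integral>\<^sup>+j. ennreal (w j) * (\<integral>\<^sup>+x. g x \<partial>N j) \<partial>count_space UNIV)"
      unfolding W_def by (rule nn_integral_density) auto
    also have "\<dots> = (\<Sum>j\<in>UNIV. ennreal (w j) * (\<integral>\<^sup>+x. g x \<partial>N j))"
      by (rule nn_integral_count_space_finite) simp
    finally show ?thesis .
  qed
  have sM: "sets M = sets borel" unfolding M_def by (rule sets_bind[OF _ spW]) (simp add: sN)
  have emN: "emeasure (N j) {..x} = ennreal (F j x)" for j x
  proof -
    interpret real_distribution "N j" using cdf_props(1)[OF F] by (simp add: N_def)
    have "emeasure (N j) {..x} = ennreal (measure (N j) {..x})" by (simp add: emeasure_eq_measure)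
    also have "measure (N j) {..x} = F j x"
    proof -
      have "cdf (law (F j)) x = F j x" using cdf_props(2)[OF F, of j] by simp
      then show ?thesis by (simp add: N_def cdf_def)
    qed
    finally show ?thesis .
  qed
  have emM: "emeasure M A = (\<Sum>j\<in>UNIV. ennreal (w j) * emeasure (N j) A)" if A: "A \<in> sets borel" for A
  proof -
    have "emeasure M A = (\<integral>\<^sup>+x. indicator A x \<partial>M)" using A sM by (simp add: nn_integral_indicator)
    also have "\<dots> = (\<Sum>j\<in>UNIV. ennreal (w j) * (\<integral>\<^sup>+x. indicator A x \<partial>N j))"
      by (rule nnM) (use A in simp)
    also have "\<dots> = (\<Sum>j\<in>UNIV. ennreal (w j) * emeasure (N j) A)" using A sN by (simp add: nn_integral_indicator)
    finally show ?thesis .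
  qed
  have Giic: "emeasure M {..x} = ennreal (G x)" for x
  proof -
    have "emeasure M {..x} = (\<Sum>j\<in>UNIV. ennreal (w j) * ennreal (F j x))" by (simp add: emM emN)
    also have "\<dots> = (\<Sum>j\<in>UNIV. ennreal (w j * F j x))"
      using w cdf_range[OF F] by (simp add: ennreal_mult)
    also have "\<dots> = ennreal (G x)"
      unfolding G_def using w cdf_range[OF F] by (intro sum_ennreal) simp
    finally show ?thesis .
  qed
  have Gc: "is_cdf G" unfolding G_def by (rule mix_is_cdf[OF w F])
  have Gnn: "0 \<le> G x" for x using cdf_range[OF Gc] by simp
  have finM: "finite_borel_measure M"
  proof -
    have "emeasure M (space M) = (\<Sum>j\<in>UNIV. ennreal (w j) * emeasure (N j) UNIV)"
      using sM emM[of UNIV] by (simp add: sets_eq_imp_space_eq[OF sM])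
    also have "\<dots> = (\<Sum>j\<in>UNIV. ennreal (w j))"
    proof -
      have "emeasure (N j) UNIV = 1" for j
      proof -
        interpret real_distribution "N j" using cdf_props(1)[OF F] by (simp add: N_def)
        show ?thesis using emeasure_space_1 by simp
      qed
      then show ?thesis by simp
    qed
    also have "\<dots> = ennreal 1" using w by (subst sum_ennreal) auto
    finally have "emeasure M (space M) \<noteq> \<infinity>" by simp
    then have "finite_measure M" by (rule finite_measureI)
    then show ?thesis using sM unfolding finite_borel_measure_def finite_borel_measure_axioms_def by simp
  qed
  have lawG: "law G = M"
  proof (rule cdf_unique')
    show "finite_borel_measure (law G)"
      using cdf_props(1)[OF Gc] by (simp add: real_distribution.finite_borel_measure_M)
    show "finite_borel_measure M" by (rule finM)
    show "cdf (law G) = cdf M"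
    proof
      fix x
      have "cdf M x = enn2real (emeasure M {..x})" by (simp add: cdf_def measure_def)
      also have "\<dots> = G x" using Giic Gnn by simp
      finally show "cdf (law G) x = cdf M x" using cdf_props(2)[OF Gc] by simp
    qed
  qed
  show ?thesis using nnM[OF f] lawG by (simp add: G_def N_def)
qed


definition piL :: "(real \<Rightarrow> real) \<Rightarrow> real \<Rightarrow> real" where
  "piL F t = (\<integral>x. max (x - t) 0 \<partial>law F)"

lemma sets_law[simp]: "sets (law F) = sets borel"
  by (simp add: law_def)

lemma space_law[simp]: "space (law F) = UNIV"
  by (simp add: law_def)

lemma cdf1_int:
  assumes "is_cdf1 F"
  shows "integrable (law F) (\<lambda>x. max (x - t) 0)"
proof -
  interpret real_distribution "law F" using assms cdf_props(1) by (simp add: is_cdf1_def)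
  have a: "integrable (law F) (\<lambda>x. x - t)"
    using assms by (intro Bochner_Integration.integrable_diff) (auto simp: is_cdf1_def)
  show ?thesis by (rule Bochner_Integration.integrable_max[OF a]) simp
qed

lemma piL_nonneg: "0 \<le> piL F t"
  unfolding piL_def by (rule Bochner_Integration.integral_nonneg) simp

lemma ext_L:
  assumes "is_cdf1 F"
  shows "(\<integral>\<^sup>+x. ennreal (max (x - t) 0) \<partial>law F) = ennreal (piL F t)"
    and "ext_integral F (\<lambda>x. max (x - t) 0) = ereal (piL F t)"
proof -
  show nn: "(\<integral>\<^sup>+x. ennreal (max (x - t) 0) \<partial>law F) = ennreal (piL F t)"
    unfolding piL_def by (rule nn_integral_eq_integral[OF cdf1_int[OF assms]]) simp
  have z: "(\<integral>\<^sup>+x. ennreal (- max (x - t) 0) \<partial>law F) = 0"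
  proof -
    have "(\<integral>\<^sup>+x. ennreal (- max (x - t) 0) \<partial>law F) = (\<integral>\<^sup>+x. 0 \<partial>law F)"
      by (rule nn_integral_cong) (simp add: ennreal_neg)
    then show ?thesis by simp
  qed
  show "ext_integral F (\<lambda>x. max (x - t) 0) = ereal (piL F t)"
    unfolding ext_integral_def z nn using piL_nonneg[of F t] by (simp add: zero_ennreal.rep_eq)
qed

lemma pi_bounds:
  assumes F: "is_cdf1 F" and h: "0 < h"
  shows "h * (1 - F (t + h)) \<le> piL F t - piL F (t + h)"
    and "piL F t - piL F (t + h) \<le> h * (1 - F t)"
proof -
  have Fc: "is_cdf F" using F by (simp add: is_cdf1_def)
  interpret real_distribution "law F" by (rule cdf_props(1)[OF Fc])
  have D: "piL F t - piL F (t + h) = (\<integral>x. max (x - t) 0 - max (x - (t + h)) 0 \<partial>law F)"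
    unfolding piL_def by (rule Bochner_Integration.integral_diff[symmetric, OF cdf1_int[OF F] cdf1_int[OF F]])
  have intI: "integrable (law F) (\<lambda>x. h * indicator {s<..} x)" for s
    by (intro Bochner_Integration.integrable_mult_right integrable_real_indicator) (auto simp: emeasure_eq_measure)
  have intD: "integrable (law F) (\<lambda>x. max (x - t) 0 - max (x - (t + h)) 0)"
    by (intro Bochner_Integration.integrable_diff cdf1_int[OF F])
  have I: "(\<integral>x. h * indicator {s<..} x \<partial>law F) = h * (1 - F s)" for s
  proof -
    have "{s<..} = space (law F) - {..s}" by auto
    then have "measure (law F) {s<..} = 1 - measure (law F) {..s}"
      using prob_compl[of "{..s}"] by simp
    also have "measure (law F) {..s} = F s"
    proof -
      have "cdf (law F) s = F s" using cdf_props(2)[OF Fc] by simp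
      then show ?thesis by (simp add: cdf_def)
    qed
    finally have "measure (law F) {s<..} = 1 - F s" .
    then show ?thesis by simp
  qed
  have "(\<integral>x. h * indicator {t + h<..} x \<partial>law F) \<le> (\<integral>x. max (x - t) 0 - max (x - (t + h)) 0 \<partial>law F)"
    by (rule integral_mono[OF intI intD]) (use h in \<open>auto simp: indicator_def\<close>)
  then show "h * (1 - F (t + h)) \<le> piL F t - piL F (t + h)" unfolding D I .
  have "(\<integral>x. max (x - t) 0 - max (x - (t + h)) 0 \<partial>law F) \<le> (\<integral>x. h * indicator {t<..} x \<partial>law F)"
    by (rule integral_mono[OF intD intI]) (use h in \<open>auto simp: indicator_def\<close>)
  then show "piL F t - piL F (t + h) \<le> h * (1 - F t)" unfolding D I .
qed

lemma pi_le:
  assumes F: "is_cdf1 F" and G: "is_cdf1 G" and eq: "\<And>t. piL F t = piL G t"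
  shows "F t \<le> G t"
proof -
  have Gc: "is_cdf G" using G by (simp add: is_cdf1_def)
  have lim: "(G \<longlongrightarrow> G t) (at_right t)"
    using Gc unfolding is_cdf_def by (simp add: continuous_within)
  have "eventually (\<lambda>s. F t \<le> G s) (at_right t)"
    using eventually_at_right_less[of t]
  proof (rule eventually_mono)
    fix s assume "t < s"
    define h where "h = s - t"
    have h: "0 < h" and s: "s = t + h" using \<open>t < s\<close> by (auto simp: h_def)
    have "h * (1 - G s) \<le> h * (1 - F t)"
      using pi_bounds(1)[OF G h, of t] pi_bounds(2)[OF F h, of t] eq s by simp
    then have "1 - G s \<le> 1 - F t" using h by simp
    then show "F t \<le> G s" by simp
  qed
  then show ?thesis by (rule tendsto_lowerbound[OF lim]) simp
qed

lemma pi_inj: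
  assumes F: "is_cdf1 F" and G: "is_cdf1 G" and eq: "\<And>t. piL F t = piL G t"
  shows "F = G"
proof
  fix t show "F t = G t" using pi_le[OF F G eq, of t] pi_le[OF G F eq[symmetric], of t] by simp
qed

lemma mix_cdf1:
  fixes w :: "'n::finite \<Rightarrow> real" and F :: "'n \<Rightarrow> real \<Rightarrow> real"
  assumes w: "\<And>j. 0 \<le> w j" "(\<Sum>j\<in>UNIV. w j) = 1" and F: "\<And>j. is_cdf1 (F j)"
  shows "is_cdf1 (\<lambda>x. \<Sum>j\<in>UNIV. w j * F j x)"
    and "piL (\<lambda>x. \<Sum>j\<in>UNIV. w j * F j x) t = (\<Sum>j\<in>UNIV. w j * piL (F j) t)"
proof -
  have Fc: "\<And>j. is_cdf (F j)" using F by (simp add: is_cdf1_def)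
  define G where "G = (\<lambda>x. \<Sum>j\<in>UNIV. w j * F j x)"
  have Gc: "is_cdf G" unfolding G_def by (rule mix_is_cdf[OF w Fc])
  have nnF: "(\<integral>\<^sup>+x. ennreal \<bar>x\<bar> \<partial>law (F j)) = ennreal (\<integral>x. \<bar>x\<bar> \<partial>law (F j))" for j
    by (rule nn_integral_eq_integral) (use F[of j] in \<open>auto simp: is_cdf1_def\<close>)
  have "(\<integral>\<^sup>+x. ennreal \<bar>x\<bar> \<partial>law G) = (\<Sum>j\<in>UNIV. ennreal (w j) * (\<integral>\<^sup>+x. ennreal \<bar>x\<bar> \<partial>law (F j)))"
    unfolding G_def by (rule mix_nn[OF w Fc]) simp
  also have "\<dots> = ennreal (\<Sum>j\<in>UNIV. w j * (\<integral>x. \<bar>x\<bar> \<partial>law (F j)))"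
    unfolding nnF using w by (simp add: ennreal_mult[symmetric])
  finally have "(\<integral>\<^sup>+x. ennreal \<bar>x\<bar> \<partial>law G) < \<infinity>" by simp
  moreover have "(\<lambda>x. x) \<in> borel_measurable (law G)"
    unfolding measurable_cong_sets[OF sets_law refl] by simp
  ultimately have "integrable (law G) (\<lambda>x. x)" by (subst integrable_iff_bounded) simp
  then show cG: "is_cdf1 (\<lambda>x. \<Sum>j\<in>UNIV. w j * F j x)" using Gc unfolding G_def by (simp add: is_cdf1_def)
  have "ennreal (piL G t) = (\<integral>\<^sup>+x. ennreal (max (x - t) 0) \<partial>law G)"
    by (rule ext_L(1)[symmetric]) (use cG in \<open>simp add: G_def\<close>)
  also have "\<dots> = (\<Sum>j\<in>UNIV. ennreal (w j) * (\<integral>\<^sup>+x. ennreal (max (x - t) 0) \<partial>law (F j)))"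
    unfolding G_def by (rule mix_nn[OF w Fc]) simp
  also have "\<dots> = ennreal (\<Sum>j\<in>UNIV. w j * piL (F j) t)"
    unfolding ext_L(1)[OF F] using w piL_nonneg by (simp add: ennreal_mult[symmetric])
  finally show "piL (\<lambda>x. \<Sum>j\<in>UNIV. w j * F j x) t = (\<Sum>j\<in>UNIV. w j * piL (F j) t)"
    unfolding G_def using piL_nonneg w by (simp add: sum_nonneg)
qed

lemma part_iv:
  fixes L :: "real^'n^'n"
  assumes ds: "doubly_stochastic L" and F: "\<And>j. is_cdf1 (F j)"
  shows "cx_le_tuple (dmix L F) F \<longleftrightarrow> dmix L F = F"
proof
  assume cx: "cx_le_tuple (dmix L F) F"
  have w: "\<And>j. 0 \<le> L $ i $ j" "(\<Sum>j\<in>UNIV. L $ i $ j) = 1" for i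
    using ds unfolding doubly_stochastic_def by auto
  have G1: "is_cdf1 (dmix L F i)" for i
    unfolding dmix_def by (rule mix_cdf1(1)[OF w F])
  have piG: "piL (dmix L F i) t = (\<Sum>j\<in>UNIV. L $ i $ j * piL (F j) t)" for i t
    unfolding dmix_def by (rule mix_cdf1(2)[OF w F])
  have le: "piL (dmix L F k) t \<le> piL (F k) t" for k t
  proof -
    have "ext_integral (dmix L F k) (\<lambda>x. max (x - t) 0) \<le> ext_integral (F k) (\<lambda>x. max (x - t) 0)"
      using cx convex_hinge[of t] unfolding cx_le_tuple_def cx_le_def by blast
    then show ?thesis unfolding ext_L(2)[OF G1] ext_L(2)[OF F] by simp
  qed
  have sums: "(\<Sum>k\<in>UNIV. piL (dmix L F k) t) = (\<Sum>k\<in>UNIV. piL (F k) t)" for t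
    unfolding piG by (rule ds_sum[OF ds])
  have eq: "piL (dmix L F i) t = piL (F i) t" for i t
    by (rule sum_le_eq[of "\<lambda>k. piL (dmix L F k) t" "\<lambda>k. piL (F k) t", OF le sums])
  show "dmix L F = F"
  proof
    fix i show "dmix L F i = F i" by (rule pi_inj[OF G1 F eq])
  qed
next
  assume "dmix L F = F"
  then show "cx_le_tuple (dmix L F) F" by (simp add: cx_le_tuple_def cx_le_def)
qed

theorem proposition10:
  fixes L :: "real^'n^'n"
  assumes "doubly_stochastic L"
  shows
    "(\<forall>F. (\<forall>i. is_cdf (F i)) \<longrightarrow>
        ((st_le_tuple (dmix L F) F \<longleftrightarrow> dmix L F = F) \<and>
         (st_le_tuple F (dmix L F) \<longleftrightarrow> dmix L F = F))) \<and>
    (\<forall>F. (\<forall>i. is_cdf (F i)) \<longrightarrow>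
        ((st_le_tuple (qmix L F) F \<longleftrightarrow> qmix L F = F) \<and>
         (st_le_tuple F (qmix L F) \<longleftrightarrow> qmix L F = F))) \<and>
    (\<forall>F. (\<forall>i. is_cdf1 (F i)) \<longrightarrow>
        ((cx_le_tuple (qmix L F) F \<longleftrightarrow> qmix L F = F) \<and>
         (cx_le_tuple F (qmix L F) \<longleftrightarrow> qmix L F = F))) \<and>
    (\<forall>F. (\<forall>i. is_cdf1 (F i)) \<longrightarrow>
        (cx_le_tuple (dmix L F) F \<longleftrightarrow> dmix L F = F))"
  using part_i[OF assms] part_ii[OF assms] part_iii[OF assms] part_iv[OF assms] by blast

end
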